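(* Let $\tau\in(3,5)$, $c_w>0$, and $w_i=c_w(N/i)^{1/(\tau-1)}$ for $i\in[N]$. Take $\beta=\beta_{c,N}={\rm asinh}(1/\nu_N)$ and $\lambda=(\tau-2)/(\tau-1)$ in the definition of $G_N$. Then for every $z,r\in\mathbb R$, \[ \lim_{N\to\infty}N\,G_N(z/N^{1/(\tau-1)};r)=-zr\sqrt{\frac{\mathbb E[W]}{\nu}}+f\Big(\sqrt{\frac{\mathbb E[W]}{\nu}}\,z\Big), \] where $f(x)=\sum_{i\ge1}\Big(\frac12\big(\frac{\tau-2}{\tau-1}x\,i^{-1/(\tau-1)}\big)^2-\log\cosh\big(\frac{\tau-2}{\tau-1}x\,i^{-1/(\tau-1)}\big)\Big)$.
   Context: $W_N=w_{U_N}$ with $U_N$ uniform on $[N]$; for these weights $W_N$ converges in distribution to $W$ with $\mathbb P(W>w)=(w/c_w)^{-(\tau-1)}$ for $w\ge c_w$, and $\mathbb E[W_N]\to\mathbb E[W]=c_w\frac{\tau-1}{\tau-2}$, $\mathbb E[W_N^2]\to\mathbb E[W^2]<\infty$. $\nu=\mathbb E[W^2]/\mathbb E[W]$, $\nu_N=\mathbb E[W_N^2]/\mathbb E[W_N]$, $\alpha_N(\beta)=\sqrt{\sinh(\beta)/\mathbb E[W_N]}$, and $G_N(z;r)=\frac12z^2-\frac1N\sum_{i\in[N]}\log\cosh\big(\alpha_N(\beta)w_iz+r/N^\lambda\big)$. *)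

theory Defs
  imports "HOL-Analysis.Analysis"
begin

definition wt :: "real \<Rightarrow> real \<Rightarrow> nat \<Rightarrow> nat \<Rightarrow> real" where
  "wt tau cw N i = cw * (real N / real i) powr (1 / (tau - 1))"

text \<open>E[W_N] and E[W_N^2] for W_N = w_{U_N}, U_N uniform on [N].\<close>
definition EWN :: "real \<Rightarrow> real \<Rightarrow> nat \<Rightarrow> real" where
  "EWN tau cw N = (\<Sum>i=1..N. wt tau cw N i) / real N"

definition EWN2 :: "real \<Rightarrow> real \<Rightarrow> nat \<Rightarrow> real" where
  "EWN2 tau cw N = (\<Sum>i=1..N. (wt tau cw N i)^2) / real N"

definition nuN :: "real \<Rightarrow> real \<Rightarrow> nat \<Rightarrow> real" where
  "nuN tau cw N = EWN2 tau cw N / EWN tau cw N"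

text \<open>Limit law W: P(W > w) = (w/c_w)^(-(tau-1)) for w >= c_w, i.e. the Pareto density
  (tau-1) c_w^(tau-1) w^(-tau) on [c_w, infinity).\<close>
definition pareto_dens :: "real \<Rightarrow> real \<Rightarrow> real \<Rightarrow> real" where
  "pareto_dens tau cw w = (tau - 1) * cw powr (tau - 1) * w powr (- tau)"

definition EW :: "real \<Rightarrow> real \<Rightarrow> real" where
  "EW tau cw = (\<integral>w\<in>{cw..}. w * pareto_dens tau cw w \<partial>lborel)"

definition EW2 :: "real \<Rightarrow> real \<Rightarrow> real" where
  "EW2 tau cw = (\<integral>w\<in>{cw..}. w^2 * pareto_dens tau cw w \<partial>lborel)"

definition nu :: "real \<Rightarrow> real \<Rightarrow> real" where
  "nu tau cw = EW2 tau cw / EW tau cw"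

definition alphaN :: "real \<Rightarrow> real \<Rightarrow> nat \<Rightarrow> real \<Rightarrow> real" where
  "alphaN tau cw N beta = sqrt (sinh beta / EWN tau cw N)"

definition GN :: "real \<Rightarrow> real \<Rightarrow> nat \<Rightarrow> real \<Rightarrow> real \<Rightarrow> real \<Rightarrow> real \<Rightarrow> real" where
  "GN tau cw N beta lam z r =
     z^2 / 2 - (\<Sum>i=1..N. ln (cosh (alphaN tau cw N beta * wt tau cw N i * z + r / real N powr lam))) / real N"

definition ff :: "real \<Rightarrow> real \<Rightarrow> real" where
  "ff tau x = (\<Sum>i. let y = (tau - 2) / (tau - 1) * x * real (Suc i) powr (- 1 / (tau - 1))
                    in y^2 / 2 - ln (cosh y))"

end

theory Submission imports Defs "HOL-Real_Asymp.Real_Asymp" begin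

lemma mvt_bound:
  fixes f f' :: "real \<Rightarrow> real"
  assumes der: "\<And>t. (f has_real_derivative f' t) (at t)"
    and bd: "\<And>t. min a b \<le> t \<Longrightarrow> t \<le> max a b \<Longrightarrow> \<bar>f' t\<bar> \<le> B"
  shows "\<bar>f a - f b\<bar> \<le> B * \<bar>a - b\<bar>"
proof (cases a b rule: linorder_cases)
  case less
  from MVT2[OF less der] obtain t where t: "a < t" "t < b" "f b - f a = (b - a) * f' t" by blast
  have "\<bar>f' t\<bar> \<le> B" using bd t less by auto
  hence "\<bar>(b - a) * f' t\<bar> \<le> (b - a) * B" using less by (simp add: abs_mult mult_left_mono)
  with t less show ?thesis by (simp add: abs_minus_commute mult.commute)
next
  case equal then show ?thesis using bd[of a] by simp
next
  case greater
  from MVT2[OF greater der] obtain t where t: "b < t" "t < a" "f a - f b = (a - b) * f' t" by blast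
  have "\<bar>f' t\<bar> \<le> B" using bd t greater by auto
  hence "\<bar>(a - b) * f' t\<bar> \<le> (a - b) * B" using greater by (simp add: abs_mult mult_left_mono)
  with t greater show ?thesis by (simp add: mult.commute)
qed

lemma tanh_le_self: assumes "(0::real) \<le> y" shows "tanh y \<le> y"
proof -
  have "(\<lambda>t. t - tanh t) 0 \<le> (\<lambda>t. t - tanh t) y"
    by (rule DERIV_nonneg_imp_nondecreasing[OF assms])
       (auto intro!: exI derivative_eq_intros)
  thus ?thesis by simp
qed

lemma abs_tanh_le: "\<bar>tanh (y::real)\<bar> \<le> \<bar>y\<bar>"
  using tanh_le_self[of "\<bar>y\<bar>"] by simp

lemma tanh_cube_aux: assumes "(0::real) \<le> y" shows "y - tanh y \<le> y ^ 3 / 3"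
proof -
  have "(\<lambda>t. t^3/3 - t + tanh t) 0 \<le> (\<lambda>t. t^3/3 - t + tanh t) y"
  proof (rule DERIV_nonneg_imp_nondecreasing[OF assms])
    fix x :: real assume x: "0 \<le> x" "x \<le> y"
    have "tanh x ^ 2 \<le> x ^ 2" using abs_tanh_le[of x]
      by (metis abs_ge_zero abs_le_square_iff)
    thus "\<exists>d. ((\<lambda>t. t^3/3 - t + tanh t) has_real_derivative d) (at x) \<and> 0 \<le> d"
      by (intro exI[of _ "x^2 - tanh x ^ 2"]) (auto intro!: derivative_eq_intros simp: power2_eq_square)
  qed
  thus ?thesis by simp
qed

lemma tanh_cube: "\<bar>(y::real) - tanh y\<bar> \<le> \<bar>y\<bar> ^ 3 / 3"
proof -
  have "\<bar>y - tanh y\<bar> = \<bar>y\<bar> - tanh \<bar>y\<bar>"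
    using tanh_le_self[of y] tanh_le_self[of "-y"] by (cases "y \<ge> 0") auto
  thus ?thesis using tanh_cube_aux[of "\<bar>y\<bar>"] by simp
qed

lemma tanh_sq: "\<bar>(y::real) - tanh y\<bar> \<le> y ^ 2"
proof (cases "\<bar>y\<bar> \<le> 3")
  case True
  have "\<bar>y\<bar> ^ 3 / 3 = \<bar>y\<bar>^2 * (\<bar>y\<bar> / 3)" by (simp add: power3_eq_cube power2_eq_square)
  also have "\<dots> \<le> \<bar>y\<bar>^2 * 1" using True by (intro mult_left_mono) auto
  finally show ?thesis using tanh_cube[of y] by simp
next
  case False
  have "\<bar>y - tanh y\<bar> \<le> \<bar>y\<bar> + 1" using tanh_real_bounds[of y] by auto
  also have "\<dots> \<le> \<bar>y\<bar> * \<bar>y\<bar>"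
  proof -
    have "3 * \<bar>y\<bar> \<le> \<bar>y\<bar> * \<bar>y\<bar>" using False by (intro mult_right_mono) auto
    thus ?thesis using False by linarith
  qed
  finally show ?thesis by (simp add: power2_eq_square)
qed

lemma lncosh_deriv: "((\<lambda>t. ln (cosh t)) has_real_derivative tanh t) (at (t::real))"
  by (auto intro!: derivative_eq_intros simp: tanh_def)

definition hh :: "real \<Rightarrow> real" where "hh y = y^2/2 - ln (cosh y)"

lemma hh_deriv: "(hh has_real_derivative (t - tanh t)) (at (t::real))"
  unfolding hh_def by (auto intro!: derivative_eq_intros simp: tanh_def)

lemma hh_lip: assumes "\<bar>u\<bar> \<le> M" "\<bar>v\<bar> \<le> M" shows "\<bar>hh u - hh v\<bar> \<le> M^3/3 * \<bar>u - v\<bar>"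
proof (rule mvt_bound[OF hh_deriv])
  fix t assume "min u v \<le> t" "t \<le> max u v"
  hence "\<bar>t\<bar> \<le> M" using assms by auto
  hence "\<bar>t\<bar>^3/3 \<le> M^3/3" by (simp add: power_mono)
  thus "\<bar>t - tanh t\<bar> \<le> M^3/3" using tanh_cube[of t] by linarith
qed

lemma hh_0 [simp]: "hh 0 = 0" by (simp add: hh_def)

lemma hh_bound: "\<bar>hh u\<bar> \<le> \<bar>u\<bar>^4/3"
  using hh_lip[of u "\<bar>u\<bar>" 0] by (simp add: power_Suc2 power3_eq_cube) (simp add: power4_eq_xxxx)

lemma lncosh_taylor: "\<bar>ln (cosh ((y::real) + e)) - ln (cosh y) - e * tanh y\<bar> \<le> e^2"
proof -
  have "\<bar>(\<lambda>t. ln (cosh t) - t * tanh y) (y + e) - (\<lambda>t. ln (cosh t) - t * tanh y) y\<bar> \<le> \<bar>e\<bar> * \<bar>(y + e) - y\<bar>"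
  proof (rule mvt_bound[where f="\<lambda>t. ln (cosh t) - t * tanh y" and f'="\<lambda>t. tanh t - tanh y"])
    show "\<And>t. ((\<lambda>t. ln (cosh t) - t * tanh y) has_real_derivative tanh t - tanh y) (at t)"
      by (auto intro!: derivative_eq_intros simp: tanh_def)
    fix t assume t: "min (y + e) y \<le> t" "t \<le> max (y + e) y"
    have "\<bar>tanh t - tanh y\<bar> \<le> 1 * \<bar>t - y\<bar>"
    proof (rule mvt_bound)
      show "\<And>s. (tanh has_real_derivative 1 - tanh s ^ 2) (at s)"
        by (auto intro!: derivative_eq_intros)
      fix s :: real
      have "tanh s ^ 2 \<le> 1" using tanh_real_bounds[of s] by (auto simp: abs_square_le_1)
      thus "\<bar>1 - tanh s ^ 2\<bar> \<le> 1" by auto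
    qed
    thus "\<bar>tanh t - tanh y\<bar> \<le> \<bar>e\<bar>" using t by auto
  qed
  thus ?thesis by (simp add: algebra_simps power2_eq_square)
qed

lemma step_bounds:
  fixes s x :: real assumes s: "0 < s" "s < 1" and x: "0 < x"
  shows "(x+1) powr (-s) \<le> (x+1) powr (1-s)/(1-s) - x powr (1-s)/(1-s)"
    and "(x+1) powr (1-s)/(1-s) - x powr (1-s)/(1-s) \<le> x powr (-s)"
proof -
  have "\<And>t. x \<le> t \<Longrightarrow> t \<le> x + 1 \<Longrightarrow> ((\<lambda>t. t powr (1-s)/(1-s)) has_real_derivative t powr (-s)) (at t)"
  proof -
    fix t assume "x \<le> t" "t \<le> x + 1"
    hence t: "0 < t" using x by auto
    show "((\<lambda>t. t powr (1-s)/(1-s)) has_real_derivative t powr (-s)) (at t)"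
      using DERIV_cdivide[OF has_real_derivative_powr[OF t, of "1-s"], of "1-s"] s by simp
  qed
  from MVT2[of x "x+1", OF _ this] obtain t where t: "x < t" "t < x + 1"
    "(x+1) powr (1-s)/(1-s) - x powr (1-s)/(1-s) = (x + 1 - x) * t powr (-s)" by auto
  have "(x+1) powr (-s) \<le> t powr (-s)" "t powr (-s) \<le> x powr (-s)"
    using t x s by (auto intro!: powr_mono2')
  thus "(x+1) powr (-s) \<le> (x+1) powr (1-s)/(1-s) - x powr (1-s)/(1-s)"
    and "(x+1) powr (1-s)/(1-s) - x powr (1-s)/(1-s) \<le> x powr (-s)" using t by auto
qed

lemma psum_lower:
  fixes s :: real assumes s: "0 < s" "s < 1"
  shows "real (N+1) powr (1-s)/(1-s) - 1/(1-s) \<le> (\<Sum>i=1..N. real i powr (-s))"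
proof (induction N)
  case 0 then show ?case by simp
next
  case (Suc N)
  have "real (N+1+1) powr (1-s)/(1-s) - real (N+1) powr (1-s)/(1-s) \<le> real (N+1) powr (-s)"
    using step_bounds(2)[OF s, of "real (N+1)"] by (simp add: add.commute)
  with Suc show ?case by simp
qed

lemma psum_upper:
  fixes s :: real assumes s: "0 < s" "s < 1"
  shows "(\<Sum>i=1..N. real i powr (-s)) \<le> 1 + real N powr (1-s)/(1-s)"
proof (induction N)
  case 0 then show ?case by simp
next
  case (Suc N)
  have "real (N+1) powr (-s) \<le> real (N+1) powr (1-s)/(1-s) - real N powr (1-s)/(1-s)"
  proof (cases N)
    case 0 then show ?thesis using s by (simp add: field_simps)
  next
    case (Suc M)
    then show ?thesis using step_bounds(1)[OF s, of "real N"] by (simp add: add.commute)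
  qed
  with Suc show ?case by simp
qed

lemma psum_asymp:
  fixes s :: real assumes s: "0 < s" "s < 1"
  shows "(\<lambda>N. real N powr (s - 1) * (\<Sum>i=1..N. real i powr (-s))) \<longlonglongrightarrow> 1 / (1 - s)"
proof (rule tendsto_sandwich)
  show "eventually (\<lambda>N. real N powr (s - 1) * (real (N+1) powr (1-s)/(1-s) - 1/(1-s))
          \<le> real N powr (s - 1) * (\<Sum>i=1..N. real i powr (-s))) sequentially"
    using psum_lower[OF s] by (intro always_eventually allI mult_left_mono) auto
  show "eventually (\<lambda>N. real N powr (s - 1) * (\<Sum>i=1..N. real i powr (-s))
          \<le> real N powr (s - 1) * (1 + real N powr (1-s)/(1-s))) sequentially"
    using psum_upper[OF s] by (intro always_eventually allI mult_left_mono) auto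
  show "(\<lambda>N. real N powr (s - 1) * (real (N+1) powr (1-s)/(1-s) - 1/(1-s))) \<longlonglongrightarrow> 1 / (1 - s)"
    using s by real_asymp (simp add: divide_inverse)
  show "(\<lambda>N. real N powr (s - 1) * (1 + real N powr (1-s)/(1-s))) \<longlonglongrightarrow> 1 / (1 - s)"
    using s by real_asymp (simp add: divide_inverse)
qed
lemma aux_alg: "(x::real) * a * (- b / d) = - (x * (a * b)) / d"
  by (simp add: algebra_simps)

lemma lebesgue_from_HK:
  fixes f :: "real \<Rightarrow> real"
  assumes H: "(f has_integral I) S" and nn: "\<And>x. x \<in> S \<Longrightarrow> 0 \<le> f x"
    and meas: "(\<lambda>x. indicator S x *\<^sub>R f x) \<in> borel_measurable borel"
  shows "(\<integral>x\<in>S. f x \<partial>lborel) = I"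
proof -
  have fi: "f integrable_on S" using H by (rule has_integral_integrable)
  have "f absolutely_integrable_on S"
    by (rule nonnegative_absolutely_integrable_1[OF fi nn])
  hence i1: "integrable lebesgue (\<lambda>x. indicator S x *\<^sub>R f x)"
    unfolding set_integrable_def .
  have m2: "(\<lambda>x. indicator S x *\<^sub>R f x) \<in> borel_measurable lborel"
    unfolding measurable_lborel2 by (rule meas)
  have "integrable lborel (\<lambda>x. indicator S x *\<^sub>R f x)"
    using integrable_completion[OF m2] i1 by blast
  hence "set_integrable lborel S f" unfolding set_integrable_def .
  from set_borel_integral_eq_integral(2)[OF this] integral_unique[OF H] show ?thesis
    by simp
qed

lemma EW_val: assumes "3 < tau" "0 < cw" shows "EW tau cw = cw * (tau - 1) / (tau - 2)"
proof -
  have H: "((\<lambda>w. ((tau - 1) * cw powr (tau - 1)) * w powr (1 - tau)) has_integral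
     ((tau - 1) * cw powr (tau - 1)) * (-(cw powr ((1 - tau)+1)) / ((1 - tau)+1))) {cw..}"
    by (intro has_integral_mult_right has_integral_powr_to_inf) (use assms in auto)
  have H2: "((\<lambda>w. w * pareto_dens tau cw w) has_integral
     ((tau - 1) * cw powr (tau - 1)) * (-(cw powr ((1 - tau)+1)) / ((1 - tau)+1))) {cw..}"
    apply (rule has_integral_eq[OF _ H])
    using assms by (auto simp: pareto_dens_def powr_add[symmetric] powr_mult_base)
  have P: "cw powr (tau - 1) * cw powr ((1 - tau)+1) = cw"
    using assms by (simp add: powr_add[symmetric])
  have "EW tau cw = ((tau - 1) * cw powr (tau - 1)) * (-(cw powr ((1 - tau)+1)) / ((1 - tau)+1))"
    unfolding EW_def
    apply (rule lebesgue_from_HK[OF H2])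
    subgoal for x using assms unfolding pareto_dens_def by (intro mult_nonneg_nonneg) auto
    subgoal unfolding pareto_dens_def by measurable
    done
  also have "\<dots> = -((tau - 1) * cw) / ((1 - tau)+1)"
    by (simp only: aux_alg P)
  finally show ?thesis using assms by (simp add: divide_simps) (simp add: algebra_simps)
qed

lemma EW2_val: assumes "3 < tau" "0 < cw" shows "EW2 tau cw = cw^2 * (tau - 1) / (tau - 3)"
proof -
  have H: "((\<lambda>w. ((tau - 1) * cw powr (tau - 1)) * w powr (2 - tau)) has_integral
     ((tau - 1) * cw powr (tau - 1)) * (-(cw powr ((2 - tau)+1)) / ((2 - tau)+1))) {cw..}"
    by (intro has_integral_mult_right has_integral_powr_to_inf) (use assms in auto)
  have eq: "w^2 * pareto_dens tau cw w = ((tau - 1) * cw powr (tau - 1)) * w powr (2 - tau)"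
    if "w \<in> {cw..}" for w
  proof -
    have w: "0 < w" using that assms by auto
    have "w powr (2 - tau) = w powr 2 * w powr (-tau)" by (simp add: powr_add[symmetric])
    also have "w powr 2 = w^2" using w by (simp add: powr_numeral)
    finally show ?thesis unfolding pareto_dens_def by simp
  qed
  have H2: "((\<lambda>w. w^2 * pareto_dens tau cw w) has_integral
     ((tau - 1) * cw powr (tau - 1)) * (-(cw powr ((2 - tau)+1)) / ((2 - tau)+1))) {cw..}"
    by (rule has_integral_eq[OF _ H]) (use eq in auto)
  have P0: "cw powr (tau - 1) * cw powr ((2 - tau)+1) = cw powr 2"
    by (simp add: powr_add[symmetric])
  have P: "cw powr (tau - 1) * cw powr ((2 - tau)+1) = cw^2" using assms P0 by (simp add: powr_numeral)
  have "EW2 tau cw = ((tau - 1) * cw powr (tau - 1)) * (-(cw powr ((2 - tau)+1)) / ((2 - tau)+1))"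
    unfolding EW2_def
    apply (rule lebesgue_from_HK[OF H2])
    subgoal for x using assms unfolding pareto_dens_def by (intro mult_nonneg_nonneg) auto
    subgoal unfolding pareto_dens_def by measurable
    done
  also have "\<dots> = -((tau - 1) * cw^2) / ((2 - tau)+1)"
    by (simp only: aux_alg P)
  finally show ?thesis using assms by (simp add: divide_simps) (simp add: algebra_simps)
qed

lemma sum_shift1: "(\<Sum>i=1..N. F i) = (\<Sum>i<N. F (Suc i))"
  by (induction N) auto



lemma ring4: "((K::real) * p)^3/3 * (d * p) = K^3/3 * d * p^4"
  by (simp add: power_mult_distrib power4_eq_xxxx power3_eq_cube algebra_simps)

theorem mainTheorem12:
  fixes tau cw z r :: real
  assumes "3 < tau" and "tau < 5" and "0 < cw"
  shows "(\<lambda>N. real N * GN tau cw N (arsinh (1 / nuN tau cw N)) ((tau - 2) / (tau - 1))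
                 (z / real N powr (1 / (tau - 1))) r)
         \<longlonglongrightarrow> - z * r * sqrt (EW tau cw / nu tau cw) + ff tau (sqrt (EW tau cw / nu tau cw) * z)"
proof -
  note t3 = assms(1) and t5 = assms(2) and cw = assms(3)
  have t1: "tau - 1 > 0" using t3 by simp
  define g where "g = 1 / (tau - 1)"
  have g14: "1/4 < g" using t5 t1 by (simp add: g_def field_simps)
  have g12: "g < 1/2" using t3 t1 by (simp add: g_def field_simps)
  have gpos: "0 < g" using g14 by simp
  have lam: "(tau - 2) / (tau - 1) = 1 - g" using t1 by (simp add: g_def field_simps)
  have EWv: "EW tau cw = cw / (1 - g)"
    using EW_val[OF t3 cw] t1 t3 by (simp add: g_def field_simps)
  have EW2v: "EW2 tau cw = cw^2 / (1 - 2*g)"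
    using EW2_val[OF t3 cw] t1 t3 by (simp add: g_def field_simps)
  have EWpos: "EW tau cw > 0" using EWv g12 cw by simp
  have EW2pos: "EW2 tau cw > 0" using EW2v g12 cw by simp
  define S1 where "S1 = (\<lambda>N::nat. \<Sum>i=1..N. real i powr (-g))"
  define S2 where "S2 = (\<lambda>N::nat. \<Sum>i=1..N. real i powr (-(2*g)))"
  have S1lim: "(\<lambda>N. real N powr (g - 1) * S1 N) \<longlonglongrightarrow> 1/(1-g)"
    unfolding S1_def by (rule psum_asymp) (use gpos g12 in auto)
  have S2lim: "(\<lambda>N. real N powr (2*g - 1) * S2 N) \<longlonglongrightarrow> 1/(1-2*g)"
    unfolding S2_def using psum_asymp[of "2*g"] gpos g12 by simp
  have S1pos: "0 < S1 N" if "1 \<le> N" for N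
    unfolding S1_def using that by (intro sum_pos) auto
  have S2pos: "0 < S2 N" if "1 \<le> N" for N
    unfolding S2_def using that by (intro sum_pos) auto
  have wt_eq: "wt tau cw N i = cw * real N powr g * real i powr (-g)" if "1 \<le> i" for N i
    unfolding wt_def g_def[symmetric] by (simp add: powr_divide powr_minus_divide)
  have Npow: "real N powr (a - 1) = real N powr a / real N" if "1 \<le> N" for N a
    using that by (simp add: powr_diff)
  have EWN_eq: "EWN tau cw N = cw * (real N powr (g - 1) * S1 N)" if N: "1 \<le> N" for N
  proof -
    have "EWN tau cw N = (\<Sum>i=1..N. cw * real N powr g * real i powr (-g)) / real N"
      unfolding EWN_def by (simp add: wt_eq)
    also have "\<dots> = cw * real N powr g * S1 N / real N"
      unfolding S1_def by (simp add: sum_distrib_left)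
    finally show ?thesis using Npow[OF N, of g] by simp
  qed
  have sqp: "(real i powr (-g))^2 = real i powr (-(2*g))" for i
    by (simp add: power2_eq_square powr_add[symmetric])
  have EWN2_eq: "EWN2 tau cw N = cw^2 * (real N powr (2*g - 1) * S2 N)" if N: "1 \<le> N" for N
  proof -
    have sq2: "(real N powr g)^2 = real N powr (2*g)"
      by (simp add: power2_eq_square powr_add[symmetric])
    have "EWN2 tau cw N = (\<Sum>i=1..N. cw^2 * real N powr (2*g) * real i powr (-(2*g))) / real N"
      unfolding EWN2_def by (simp add: wt_eq power_mult_distrib sqp sq2)
    also have "\<dots> = cw^2 * real N powr (2*g) * S2 N / real N"
      unfolding S2_def by (simp add: sum_distrib_left)
    finally show ?thesis using Npow[OF N, of "2*g"] by simp
  qed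
  have ev1: "eventually (\<lambda>N::nat. 1 \<le> N) sequentially" by (rule eventually_ge_at_top)
  have EWNlim: "(\<lambda>N. EWN tau cw N) \<longlonglongrightarrow> EW tau cw"
  proof -
    have "(\<lambda>N. cw * (real N powr (g - 1) * S1 N)) \<longlonglongrightarrow> cw * (1/(1-g))"
      by (intro tendsto_intros S1lim)
    moreover have "eventually (\<lambda>N. cw * (real N powr (g - 1) * S1 N) = EWN tau cw N) sequentially"
      using ev1 by eventually_elim (simp add: EWN_eq)
    ultimately show ?thesis using EWv by (simp add: tendsto_cong)
  qed
  have EWN2lim: "(\<lambda>N. EWN2 tau cw N) \<longlonglongrightarrow> EW2 tau cw"
  proof -
    have "(\<lambda>N. cw^2 * (real N powr (2*g - 1) * S2 N)) \<longlonglongrightarrow> cw^2 * (1/(1-2*g))"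
      by (intro tendsto_intros S2lim)
    moreover have "eventually (\<lambda>N. cw^2 * (real N powr (2*g - 1) * S2 N) = EWN2 tau cw N) sequentially"
      using ev1 by eventually_elim (simp add: EWN2_eq)
    ultimately show ?thesis using EW2v by (simp add: tendsto_cong)
  qed
  have EWNpos: "0 < EWN tau cw N" if "1 \<le> N" for N
    using EWN_eq[OF that] S1pos[OF that] cw that by (auto intro!: mult_pos_pos)
  have EWN2pos: "0 < EWN2 tau cw N" if "1 \<le> N" for N
    using EWN2_eq[OF that] S2pos[OF that] cw that by (auto intro!: mult_pos_pos)
  define al where "al N = alphaN tau cw N (arsinh (1 / nuN tau cw N))" for N
  have al_eq: "al N = 1 / sqrt (EWN2 tau cw N)" if "1 \<le> N" for N
    using EWNpos[OF that] EWN2pos[OF that]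
    unfolding al_def alphaN_def nuN_def by (simp add: real_sqrt_divide)
  define b where "b N = al N * cw * z" for N
  define bl where "bl = cw * z / sqrt (EW2 tau cw)"
  have blim: "b \<longlonglongrightarrow> bl"
  proof -
    have "(\<lambda>N. cw * z / sqrt (EWN2 tau cw N)) \<longlonglongrightarrow> bl"
      unfolding bl_def using EW2pos by (intro tendsto_intros EWN2lim) auto
    moreover have "eventually (\<lambda>N. cw * z / sqrt (EWN2 tau cw N) = b N) sequentially"
      using ev1 by eventually_elim (simp add: b_def al_eq)
    ultimately show ?thesis by (simp add: tendsto_cong)
  qed
  define y where "y N i = b N * real i powr (-g)" for N i :: nat
  define e where "e N = r * real N powr (g - 1)" for N :: nat
  have arg: "al N * wt tau cw N i * (z / real N powr (1/(tau-1))) + r / real N powr ((tau-2)/(tau-1))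
      = y N i + e N" if N: "1 \<le> N" and i: "1 \<le> i" for N i
  proof -
    have p: "real N powr g > 0" using N by simp
    have "al N * wt tau cw N i * (z / real N powr g) = b N * real i powr (-g)"
      using p unfolding wt_eq[OF i] b_def by (simp add: field_simps)
    moreover have "r / real N powr (1 - g) = e N"
    proof -
      have "real N powr (g - 1) = inverse (real N powr (1 - g))"
        by (metis minus_diff_eq powr_minus)
      thus ?thesis unfolding e_def by (simp add: divide_inverse)
    qed
    ultimately show ?thesis unfolding g_def[symmetric] lam y_def by simp
  qed
  have sq: "(\<Sum>i=1..N. (y N i)^2) = z^2 * real N powr (1 - 2*g)" if N: "1 \<le> N" for N
  proof -
    have "(\<Sum>i=1..N. (y N i)^2) = (b N)^2 * S2 N"
      unfolding y_def S2_def by (simp add: power_mult_distrib sqp sum_distrib_left)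
    also have "(b N)^2 = cw^2 * z^2 / EWN2 tau cw N"
      using EWN2pos[OF N] unfolding b_def al_eq[OF N] by (simp add: power_mult_distrib power_divide)
    also have "cw^2 * z^2 / EWN2 tau cw N * S2 N = z^2 / real N powr (2*g - 1)"
      using S2pos[OF N] cw unfolding EWN2_eq[OF N] by (simp add: field_simps)
    also have "z^2 / real N powr (2*g - 1) = z^2 * real N powr (1 - 2*g)"
    proof -
      have "real N powr (1 - 2*g) = inverse (real N powr (2*g - 1))"
        by (metis minus_diff_eq powr_minus)
      thus ?thesis by (simp add: divide_inverse)
    qed
    finally show ?thesis .
  qed
  define A where "A N = (\<Sum>i=1..N. hh (y N i))" for N
  define C where "C N = e N * b N * S1 N" for N
  define E where "E N = (\<Sum>i=1..N. ln (cosh (y N i + e N)) - ln (cosh (y N i)) - e N * y N i)" for N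
  have main_eq: "real N * GN tau cw N (arsinh (1 / nuN tau cw N)) ((tau - 2) / (tau - 1))
                 (z / real N powr (1 / (tau - 1))) r = A N - C N - E N" if N: "1 \<le> N" for N
  proof -
    have L: "(\<Sum>i=1..N. ln (cosh (alphaN tau cw N (arsinh (1 / nuN tau cw N)) * wt tau cw N i *
               (z / real N powr (1 / (tau - 1))) + r / real N powr ((tau - 2) / (tau - 1)))))
           = (\<Sum>i=1..N. ln (cosh (y N i + e N)))"
      by (rule sum.cong[OF refl]) (use arg[OF N] in \<open>auto simp: al_def\<close>)
    have Q: "real N * (z / real N powr (1 / (tau - 1)))^2 / 2 = (\<Sum>i=1..N. (y N i)^2) / 2"
    proof -
      have "(real N powr g)^2 = real N powr (2*g)"
        by (simp add: power2_eq_square powr_add[symmetric])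
      hence "real N * (z / real N powr g)^2 = z^2 * (real N / real N powr (2*g))"
        by (simp add: power_divide)
      also have "real N / real N powr (2*g) = real N powr (1 - 2*g)"
        using N by (simp add: powr_diff)
      finally show ?thesis unfolding g_def[symmetric] sq[OF N] by simp
    qed
    have Sy: "(\<Sum>i=1..N. y N i) = b N * S1 N"
      unfolding y_def S1_def by (simp add: sum_distrib_left)
    have "real N * GN tau cw N (arsinh (1 / nuN tau cw N)) ((tau - 2) / (tau - 1))
                 (z / real N powr (1 / (tau - 1))) r
        = real N * (z / real N powr (1 / (tau - 1)))^2 / 2 - (\<Sum>i=1..N. ln (cosh (y N i + e N)))"
      unfolding GN_def L using N by (simp add: field_simps)
    also have "\<dots> = (\<Sum>i=1..N. (y N i)^2 / 2 - ln (cosh (y N i + e N)))"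
      unfolding Q by (simp add: sum_subtractf sum_divide_distrib)
    also have "\<dots> = A N - e N * (\<Sum>i=1..N. y N i) - E N"
      unfolding A_def E_def hh_def
      by (simp add: sum_subtractf sum_distrib_left sum.distrib algebra_simps)
    finally show ?thesis unfolding Sy C_def by (simp add: algebra_simps)
  qed
  have Clim: "C \<longlonglongrightarrow> r * bl * (1/(1-g))"
  proof -
    have "(\<lambda>N. r * b N * (real N powr (g - 1) * S1 N)) \<longlonglongrightarrow> r * bl * (1/(1-g))"
      by (intro tendsto_intros blim S1lim)
    thus ?thesis unfolding C_def e_def by (simp add: algebra_simps)
  qed
  have Elim: "E \<longlonglongrightarrow> 0"
  proof (rule Lim_null_comparison)
    show "eventually (\<lambda>N. norm (E N) \<le> r^2 * real N powr (2*g - 1) + \<bar>r\<bar> * z^2 * real N powr (-g)) sequentially"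
      using ev1
    proof eventually_elim
      case (elim N)
      have trm: "\<bar>ln (cosh (y N i + e N)) - ln (cosh (y N i)) - e N * y N i\<bar> \<le> (e N)^2 + \<bar>e N\<bar> * (y N i)^2" for i
      proof -
        have a: "\<bar>ln (cosh (y N i + e N)) - ln (cosh (y N i)) - e N * tanh (y N i)\<bar> \<le> (e N)^2"
          by (rule lncosh_taylor)
        have "\<bar>e N * (y N i - tanh (y N i))\<bar> \<le> \<bar>e N\<bar> * (y N i)^2"
          unfolding abs_mult by (intro mult_left_mono tanh_sq) auto
        with a show ?thesis by (simp add: algebra_simps abs_mult)
      qed
      have "\<bar>E N\<bar> \<le> (\<Sum>i=1..N. (e N)^2 + \<bar>e N\<bar> * (y N i)^2)"
        unfolding E_def by (rule order_trans[OF sum_abs sum_mono]) (rule trm)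
      also have "\<dots> = real N * (e N)^2 + \<bar>e N\<bar> * (z^2 * real N powr (1 - 2*g))"
        using sq[OF elim] by (simp add: sum.distrib sum_distrib_left[symmetric])
      also have "real N * (e N)^2 = r^2 * real N powr (2*g - 1)"
      proof -
        have x: "real N powr (1 + (g-1) + (g-1)) = real N powr 1 * real N powr (g - 1) * real N powr (g - 1)"
          by (simp only: powr_add)
        have "1 + (g-1) + (g-1) = 2*g - 1" by simp
        with x have "real N powr (2*g-1) = real N * real N powr (g - 1) * real N powr (g - 1)" by simp
        thus ?thesis unfolding e_def by (simp add: power2_eq_square algebra_simps)
      qed
      also have "\<bar>e N\<bar> * (z^2 * real N powr (1 - 2*g)) = \<bar>r\<bar> * z^2 * real N powr (-g)"
      proof -
        have x: "real N powr ((g - 1) + (1 - 2*g)) = real N powr (g - 1) * real N powr (1 - 2*g)"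
          by (simp only: powr_add)
        have "(g - 1) + (1 - 2*g) = -g" by simp
        with x have "real N powr (g - 1) * real N powr (1 - 2*g) = real N powr (-g)" by simp
        thus ?thesis unfolding e_def abs_mult by (simp add: algebra_simps)
      qed
      finally show ?case by simp
    qed
    have "(\<lambda>N. r^2 * real N powr (2*g - 1) + \<bar>r\<bar> * z^2 * real N powr (-g)) \<longlonglongrightarrow> r^2 * 0 + \<bar>r\<bar> * z^2 * 0"
      using g12 gpos
      by (intro tendsto_intros tendsto_neg_powr filterlim_real_sequentially) auto
    thus "(\<lambda>N. r^2 * real N powr (2*g - 1) + \<bar>r\<bar> * z^2 * real N powr (-g)) \<longlonglongrightarrow> 0" by simp
  qed
  define H where "H i = hh (bl * real (Suc i) powr (-g))" for i
  have sum4: "summable (\<lambda>i. real i powr (-(4*g)))"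
    using g14 by (subst summable_real_powr_iff) auto
  define Z where "Z = (\<Sum>i. real i powr (-(4*g)))"
  have p4: "(real i powr (-g))^4 = real i powr (-(4*g))" for i
  proof -
    have "(real i powr (-g))^4 = (real i powr (-g))^2 * (real i powr (-g))^2"
      by (simp add: power_add[symmetric])
    also have "\<dots> = real i powr (-(4*g))" unfolding sqp by (simp add: powr_add[symmetric])
    finally show ?thesis .
  qed
  have Hsum: "summable H"
  proof (rule summable_comparison_test')
    show "summable (\<lambda>i. \<bar>bl\<bar>^4/3 * real (Suc i) powr (-(4*g)))"
    proof -
      have "summable (\<lambda>i. real (Suc i) powr (-(4*g)))"
        using summable_Suc_iff[of "\<lambda>i. real i powr (-(4*g))"] sum4 by blast
      thus ?thesis by (rule summable_mult)
    qed
    fix i :: nat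
    have "\<bar>H i\<bar> \<le> \<bar>bl * real (Suc i) powr (-g)\<bar>^4/3" unfolding H_def by (rule hh_bound)
    also have "\<dots> = \<bar>bl\<bar>^4/3 * real (Suc i) powr (-(4*g))"
      using p4[of "Suc i"] by (simp add: abs_mult power_mult_distrib)
    finally show "norm (H i) \<le> \<bar>bl\<bar>^4/3 * real (Suc i) powr (-(4*g))" by simp
  qed
  define P where "P N = (\<Sum>i=1..N. hh (bl * real i powr (-g)))" for N
  have Plim: "P \<longlonglongrightarrow> suminf H"
  proof -
    have "P = (\<lambda>N. \<Sum>i<N. H i)" unfolding P_def H_def by (rule ext, rule sum_shift1)
    thus ?thesis using summable_LIMSEQ[OF Hsum] by simp
  qed
  have APlim: "(\<lambda>N. A N - P N) \<longlonglongrightarrow> 0"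
  proof (rule Lim_null_comparison)
    define K where "K = \<bar>bl\<bar> + 1"
    have "eventually (\<lambda>N. dist (b N) bl < 1) sequentially" using blim by (rule tendstoD) simp
    thus "eventually (\<lambda>N. norm (A N - P N) \<le> K^3/3 * \<bar>b N - bl\<bar> * Z) sequentially"
    proof eventually_elim
      case (elim N)
      have bN: "\<bar>b N\<bar> \<le> K" using elim unfolding K_def dist_real_def by linarith
      have trm: "\<bar>hh (y N i) - hh (bl * real i powr (-g))\<bar> \<le> K^3/3 * \<bar>b N - bl\<bar> * real i powr (-(4*g))" for i
      proof -
        have pp: "0 \<le> real i powr (-g)" by simp
        have "\<bar>hh (y N i) - hh (bl * real i powr (-g))\<bar>
            \<le> (K * real i powr (-g))^3/3 * \<bar>y N i - bl * real i powr (-g)\<bar>"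
          using pp bN unfolding y_def K_def
          by (intro hh_lip) (auto simp: abs_mult intro: mult_right_mono)
        also have "\<dots> = K^3/3 * \<bar>b N - bl\<bar> * (real i powr (-g))^4"
        proof -
          have ya: "\<bar>y N i - bl * real i powr (-g)\<bar> = \<bar>b N - bl\<bar> * real i powr (-g)"
            unfolding y_def using pp by (simp add: left_diff_distrib[symmetric] abs_mult)
          show ?thesis by (simp only: ya ring4)
        qed
        finally show ?thesis by (simp add: p4)
      qed
      have "norm (A N - P N) \<le> (\<Sum>i=1..N. K^3/3 * \<bar>b N - bl\<bar> * real i powr (-(4*g)))"
        unfolding A_def P_def real_norm_def sum_subtractf[symmetric]
        by (rule order_trans[OF sum_abs sum_mono]) (rule trm)
      also have "\<dots> = K^3/3 * \<bar>b N - bl\<bar> * (\<Sum>i=1..N. real i powr (-(4*g)))"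
        by (simp add: sum_distrib_left)
      also have "\<dots> \<le> K^3/3 * \<bar>b N - bl\<bar> * Z"
        unfolding Z_def using K_def
        by (intro mult_left_mono sum_le_suminf sum4) auto
      finally show ?case .
    qed
    have "(\<lambda>N. K^3/3 * \<bar>b N - bl\<bar> * Z) \<longlonglongrightarrow> K^3/3 * \<bar>bl - bl\<bar> * Z"
      by (intro tendsto_intros blim)
    thus "(\<lambda>N. K^3/3 * \<bar>b N - bl\<bar> * Z) \<longlonglongrightarrow> 0" by simp
  qed
  have Alim: "A \<longlonglongrightarrow> suminf H"
  proof -
    have "(\<lambda>N. (A N - P N) + P N) \<longlonglongrightarrow> 0 + suminf H" by (intro tendsto_intros APlim Plim)
    thus ?thesis by simp
  qed
  have sq_nu: "sqrt (EW tau cw / nu tau cw) = EW tau cw / sqrt (EW2 tau cw)"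
  proof -
    have "EW tau cw / nu tau cw = (EW tau cw)^2 / EW2 tau cw"
      unfolding nu_def using EWpos EW2pos by (simp add: field_simps power2_eq_square)
    thus ?thesis using EWpos by (simp add: real_sqrt_divide)
  qed
  have kb: "(tau - 2) / (tau - 1) * (sqrt (EW tau cw / nu tau cw) * z) = bl"
  proof -
    have "(tau - 2) / (tau - 1) * (sqrt (EW tau cw / nu tau cw) * z) = (1 - g) * (EW tau cw / sqrt (EW2 tau cw) * z)"
      by (simp only: lam sq_nu)
    also have "\<dots> = bl" unfolding bl_def EWv using g12 EW2pos by (simp add: field_simps)
    finally show ?thesis .
  qed
  have ffeq: "ff tau (sqrt (EW tau cw / nu tau cw) * z) = suminf H"
  proof -
    have "-1 / (tau - 1) = -g" by (simp add: g_def)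
    thus ?thesis unfolding ff_def H_def hh_def Let_def kb by simp
  qed
  have val: "r * bl * (1/(1-g)) = z * r * sqrt (EW tau cw / nu tau cw)"
  proof -
    have "z * r * sqrt (EW tau cw / nu tau cw) = z * r * (EW tau cw / sqrt (EW2 tau cw))"
      by (simp only: sq_nu)
    also have "\<dots> = r * bl * (1/(1-g))" unfolding bl_def EWv using g12 EW2pos by (simp add: field_simps)
    finally show ?thesis by simp
  qed
  have "(\<lambda>N. A N - C N - E N) \<longlonglongrightarrow> suminf H - r * bl * (1/(1-g)) - 0"
    by (intro tendsto_intros Alim Clim Elim)
  hence lim: "(\<lambda>N. A N - C N - E N) \<longlonglongrightarrow> - z * r * sqrt (EW tau cw / nu tau cw) + ff tau (sqrt (EW tau cw / nu tau cw) * z)"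
    unfolding ffeq val by simp
  have "eventually (\<lambda>N. A N - C N - E N = real N * GN tau cw N (arsinh (1 / nuN tau cw N)) ((tau - 2) / (tau - 1))
                 (z / real N powr (1 / (tau - 1))) r) sequentially"
    using ev1 by eventually_elim (simp add: main_eq)
  with lim show ?thesis by (simp add: tendsto_cong)
qed

end
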